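(* For every $q\in(0,\log(\frac{1+\sqrt5}{2}))$ there exist continuum many (i.e. a set of cardinality of the continuum of) distinct $S$-gap shifts which have the specification property and entropy $q$.
   Context: For a nonempty set $S\subseteq\{0,1,2,\dots\}$, the $S$-gap shift $X(S)\subseteq\{0,1\}^{\mathbb{Z}}$ is the set of bi-infinite binary sequences in which the number of consecutive zeros between ones is always an element of $S$. The entropy of a shift $X$ is $h(X)=\lim_n\frac1n\log|\mathcal{B}_n(X)|$, where $\mathcal{B}_n(X)$ is the set of words of length $n$ occurring in points of $X$ and $\log$ is to base $2$. $X$ has the specification property if there is $N\ge1$ such that for all $u,v\in\mathcal{B}(X)=\bigcup_n\mathcal{B}_n(X)$ there exists $w\in\mathcal{B}_N(X)$ with $uwv\in\mathcal{B}(X)$. *)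

theory Defs
  imports Complex_Main "HOL-Library.Equipollence"
begin

text \<open>Binary symbols are encoded as bool: True = 1, False = 0.
  A point of the full shift is a map int \<Rightarrow> bool.\<close>

definition gap_shift :: "nat set \<Rightarrow> (int \<Rightarrow> bool) set" where
  "gap_shift S = {x. \<forall>i j. i < j \<and> x i \<and> x j \<and> (\<forall>k. i < k \<and> k < j \<longrightarrow> \<not> x k)
                        \<longrightarrow> nat (j - i - 1) \<in> S}"

definition occurs_in :: "bool list \<Rightarrow> (int \<Rightarrow> bool) \<Rightarrow> bool" where
  "occurs_in w x \<longleftrightarrow> (\<exists>i. \<forall>k < length w. w ! k = x (i + int k))"

definition words_n :: "(int \<Rightarrow> bool) set \<Rightarrow> nat \<Rightarrow> bool list set" where
  "words_n X n = {w. length w = n \<and> (\<exists>x\<in>X. occurs_in w x)}"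

definition words :: "(int \<Rightarrow> bool) set \<Rightarrow> bool list set" where
  "words X = (\<Union>n. words_n X n)"

definition entropy :: "(int \<Rightarrow> bool) set \<Rightarrow> real" where
  "entropy X = lim (\<lambda>n. log 2 (real (card (words_n X n))) / real n)"

definition has_specification :: "(int \<Rightarrow> bool) set \<Rightarrow> bool" where
  "has_specification X \<longleftrightarrow>
     (\<exists>N\<ge>1. \<forall>u\<in>words X. \<forall>v\<in>words X. \<exists>w\<in>words_n X N. u @ w @ v \<in> words X)"

end

theory Submission
  imports Defs "HOL-Analysis.Analysis"
begin


definition gapok :: "nat set \<Rightarrow> bool list \<Rightarrow> bool" where
"gapok S w \<longleftrightarrow> (\<forall>i j. i < j \<and> j < length w \<and> w!i \<and> w!j \<and> (\<forall>k. i<k \<and> k<j \<longrightarrow> \<not> w!k) \<longrightarrow> j - i - 1 \<in> S)"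

lemma words_n_gap: "words_n (gap_shift S) n = {w. length w = n \<and> gapok S w}"
proof (intro set_eqI iffI)
  fix w assume "w \<in> words_n (gap_shift S) n"
  then obtain x i where x: "x \<in> gap_shift S" and len: "length w = n" and
    occ: "\<And>k. k < length w \<Longrightarrow> w ! k = x (i + int k)"
    unfolding words_n_def occurs_in_def by blast
  have "gapok S w" unfolding gapok_def
  proof (intro allI impI)
    fix a b assume h: "a < b \<and> b < length w \<and> w!a \<and> w!b \<and> (\<forall>k. a<k \<and> k<b \<longrightarrow> \<not> w!k)"
    have "\<forall>k. i + int a < k \<and> k < i + int b \<longrightarrow> \<not> x k"
    proof (intro allI impI)
      fix k assume k: "i + int a < k \<and> k < i + int b"
      define k' where "k' = nat (k - i)"
      have "k = i + int k'" "a < k'" "k' < b" using k unfolding k'_def by auto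
      thus "\<not> x k" using h occ[of k'] by auto
    qed
    moreover have "x (i + int a)" "x (i + int b)" using h occ by auto
    ultimately have "nat ((i + int b) - (i + int a) - 1) \<in> S" using x h unfolding gap_shift_def
      by (intro mem_Collect_eq[THEN iffD1, OF x[unfolded gap_shift_def], rule_format]) auto
    moreover have "nat ((i + int b) - (i + int a) - 1) = b - a - 1" using h by auto
    ultimately show "b - a - 1 \<in> S" by simp
  qed
  thus "w \<in> {w. length w = n \<and> gapok S w}" using len by simp
next
  fix w assume "w \<in> {w. length w = n \<and> gapok S w}"
  hence len: "length w = n" and g: "gapok S w" by auto
  define x where "x = (\<lambda>k::int. 0 \<le> k \<and> k < int n \<and> w ! nat k)"
  have "x \<in> gap_shift S" unfolding gap_shift_def
  proof (intro CollectI allI impI)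
    fix i j assume h: "i < j \<and> x i \<and> x j \<and> (\<forall>k. i < k \<and> k < j \<longrightarrow> \<not> x k)"
    have "nat j - nat i - 1 \<in> S" using g unfolding gapok_def
    proof (elim allE impE)
      show "nat i < nat j \<and> nat j < length w \<and> w ! nat i \<and> w ! nat j \<and>
        (\<forall>k. nat i < k \<and> k < nat j \<longrightarrow> \<not> w ! k)"
      proof (intro conjI allI impI)
        fix k assume k: "nat i < k \<and> k < nat j"
        have "i < int k" "int k < j" using k h by (auto simp: x_def)
        hence "\<not> x (int k)" using h by blast
        thus "\<not> w ! k" using k h len by (auto simp: x_def)
      qed (use h len in \<open>auto simp: x_def\<close>)
    qed
    moreover have "nat (j - i - 1) = nat j - nat i - 1" using h by (auto simp: x_def)
    ultimately show "nat (j - i - 1) \<in> S" by simp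
  qed
  moreover have "occurs_in w x" unfolding occurs_in_def using len by (auto simp: x_def intro!: exI[of _ 0])
  ultimately show "w \<in> words_n (gap_shift S) n" unfolding words_n_def using len by auto
qed

lemma words_gap: "words (gap_shift S) = {w. gapok S w}"
  unfolding words_def words_n_gap by auto



lemma gapokI:
  assumes "\<And>i j. i < j \<Longrightarrow> j < length w \<Longrightarrow> w!i \<Longrightarrow> w!j \<Longrightarrow> (\<And>k. i<k \<Longrightarrow> k<j \<Longrightarrow> \<not> w!k) \<Longrightarrow> j - i - 1 \<in> S"
  shows "gapok S w"
  using assms unfolding gapok_def by blast

lemma gapokD:
  assumes "gapok S w" "i < j" "j < length w" "w!i" "w!j" "\<And>k. i<k \<Longrightarrow> k<j \<Longrightarrow> \<not> w!k"
  shows "j - i - 1 \<in> S"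
  using assms unfolding gapok_def by blast

lemma gapok_prefix: assumes "gapok S (xs @ ys)" shows "gapok S xs"
proof (rule gapokI)
  fix i j assume h: "i < j" "j < length xs" "xs!i" "xs!j" and b: "\<And>k. i<k \<Longrightarrow> k<j \<Longrightarrow> \<not> xs!k"
  show "j - i - 1 \<in> S"
    by (rule gapokD[OF assms, of i j]) (use h b in \<open>auto simp: nth_append\<close>)
qed

lemma gapok_suffix: assumes "gapok S (xs @ ys)" shows "gapok S ys"
proof (rule gapokI)
  fix i j assume h: "i < j" "j < length ys" "ys!i" "ys!j" and b: "\<And>k. i<k \<Longrightarrow> k<j \<Longrightarrow> \<not> ys!k"
  have "(j + length xs) - (i + length xs) - 1 \<in> S"
  proof (rule gapokD[OF assms])
    fix k assume "i + length xs < k" "k < j + length xs"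
    thus "\<not> (xs @ ys) ! k" using b[of "k - length xs"] by (auto simp: nth_append)
  qed (use h in \<open>auto simp: nth_append\<close>)
  thus "j - i - 1 \<in> S" by simp
qed

lemma gapok_left_zero: assumes "True \<notin> set xs" "gapok S ys" shows "gapok S (xs @ ys)"
proof (rule gapokI)
  fix i j assume h: "i < j" "j < length (xs@ys)" "(xs@ys)!i" "(xs@ys)!j" and b: "\<And>k. i<k \<Longrightarrow> k<j \<Longrightarrow> \<not> (xs@ys)!k"
  have ix: "i \<ge> length xs"
  proof (rule ccontr)
    assume "\<not> ?thesis" hence "xs ! i" using h by (auto simp: nth_append)
    thus False using assms(1) \<open>\<not> length xs \<le> i\<close> by (metis linorder_not_le nth_mem)
  qed
  have "(j - length xs) - (i - length xs) - 1 \<in> S"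
  proof (rule gapokD[OF assms(2)])
    fix k assume "i - length xs < k" "k < j - length xs"
    thus "\<not> ys ! k" using b[of "k + length xs"] ix by (auto simp: nth_append)
  qed (use h ix in \<open>auto simp: nth_append\<close>)
  thus "j - i - 1 \<in> S" using ix h by simp
qed

lemma gapok_right_zero: assumes "True \<notin> set ys" "gapok S xs" shows "gapok S (xs @ ys)"
proof (rule gapokI)
  fix i j assume h: "i < j" "j < length (xs@ys)" "(xs@ys)!i" "(xs@ys)!j" and b: "\<And>k. i<k \<Longrightarrow> k<j \<Longrightarrow> \<not> (xs@ys)!k"
  have jx: "j < length xs"
  proof (rule ccontr)
    assume "\<not> ?thesis" hence "ys ! (j - length xs)" using h by (auto simp: nth_append)
    moreover have "j - length xs < length ys" using h(2) \<open>\<not> j < length xs\<close> by simp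
    ultimately have "True \<in> set ys" using nth_mem by fastforce
    thus False using assms(1) by simp
  qed
  show "j - i - 1 \<in> S"
  proof (rule gapokD[OF assms(2)])
    fix k assume "i < k" "k < j"
    thus "\<not> xs ! k" using b[of k] jx by (auto simp: nth_append)
  qed (use h jx in \<open>auto simp: nth_append\<close>)
qed

lemma gapok_no_true: "True \<notin> set w \<Longrightarrow> gapok S w"
  using gapok_right_zero[of w S "[]"] by (auto simp: gapok_def)

lemma gapok_glue:
  assumes a: "gapok S (xs @ [True])" and b: "gapok S (True # ys)"
  shows "gapok S (xs @ True # ys)"
proof (rule gapokI)
  fix i j assume h: "i < j" "j < length (xs @ True # ys)" "(xs @ True # ys)!i" "(xs @ True # ys)!j"
    and bt: "\<And>k. i<k \<Longrightarrow> k<j \<Longrightarrow> \<not> (xs @ True # ys)!k"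
  let ?p = "length xs"
  show "j - i - 1 \<in> S"
  proof (cases "j \<le> ?p")
    case True
    show ?thesis
    proof (rule gapokD[OF a])
      fix k assume "i < k" "k < j" thus "\<not> (xs @ [True]) ! k" using bt[of k] True by (auto simp: nth_append)
    qed (use h True in \<open>auto simp: nth_append split: if_splits\<close>)
  next
    case False
    hence ip: "i \<ge> ?p"
    proof -
      have "\<not> i < ?p"
      proof
        assume "i < ?p" thus False using bt[of ?p] False by (auto simp: nth_append)
      qed
      thus ?thesis by simp
    qed
    have "(j - ?p) - (i - ?p) - 1 \<in> S"
    proof (rule gapokD[OF b])
      fix k assume "i - ?p < k" "k < j - ?p"
      thus "\<not> (True # ys) ! k" using bt[of "k + ?p"] ip by (auto simp: nth_append)
    qed (use h ip False in \<open>auto simp: nth_append\<close>)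
    thus ?thesis using ip h by simp
  qed
qed

lemma gapok_block: assumes "s \<in> S" shows "gapok S (True # replicate s False @ [True])"
proof (rule gapokI)
  fix i j assume h: "i < j" "j < length (True # replicate s False @ [True])"
    "(True # replicate s False @ [True])!i" "(True # replicate s False @ [True])!j"
  have nth: "(True # replicate s False @ [True]) ! k = (k = 0 \<or> k = s + 1)" if "k < s + 2" for k
    using that by (cases k) (auto simp: nth_append)
  have "i = 0 \<or> i = s + 1" "j = 0 \<or> j = s + 1" using h nth[of i] nth[of j] by auto
  hence "i = 0" "j = s + 1" using h by auto
  thus "j - i - 1 \<in> S" using assms by simp
qed

lemma decomp_first: "True \<in> set w \<Longrightarrow> \<exists>a w'. w = replicate a False @ True # w'"
proof (induction w)
  case (Cons x w)
  show ?case
  proof (cases x)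
    case True thus ?thesis by (auto intro!: exI[of _ 0])
  next
    case False
    then obtain a w' where "w = replicate a False @ True # w'" using Cons by auto
    thus ?thesis using False by (auto intro!: exI[of _ "Suc a"])
  qed
qed simp

lemma decomp_last: "True \<in> set w \<Longrightarrow> \<exists>w' b. w = w' @ True # replicate b False"
proof (induction w rule: rev_induct)
  case (snoc x w)
  show ?case
  proof (cases x)
    case True thus ?thesis by (auto intro!: exI[of _ 0])
  next
    case False
    then obtain w' b where "w = w' @ True # replicate b False" using snoc by auto
    thus ?thesis using False by (auto intro!: exI[of _ "Suc b"] simp: replicate_append_same[symmetric])
  qed
qed simp



definition chain :: "nat list \<Rightarrow> bool list" where
  "chain ss = True # concat (map (\<lambda>s. replicate s False @ [True]) ss)"

lemma gapok_chain: "set ss \<subseteq> S \<Longrightarrow> gapok S (chain ss)"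
proof (induction ss)
  case Nil thus ?case by (auto simp: chain_def gapok_def)
next
  case (Cons s ss)
  have "chain (s # ss) = (True # replicate s False) @ True # concat (map (\<lambda>s. replicate s False @ [True]) ss)"
    by (simp add: chain_def)
  moreover have "gapok S ((True # replicate s False) @ [True])" using gapok_block[of s S] Cons by simp
  moreover have "gapok S (True # concat (map (\<lambda>s. replicate s False @ [True]) ss))"
    using Cons by (simp add: chain_def)
  ultimately show ?case using gapok_glue by metis
qed

lemma len_concat_rep: "length (concat (map (\<lambda>s. replicate s False @ [True]) (replicate k m))) = k * (m + 1)"
  by (induction k) auto

lemma spec_gap:
  fixes D M :: nat
  assumes D: "D \<ge> 1" and DM: "D dvd M" and MD: "M \<ge> D" and ES: "\<And>j. M + D * j \<in> S"
  shows "has_specification (gap_shift S)"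
proof -
  define N where "N = 2 * M + 1 + 2 * D * (M + 1)"
  have main: "\<exists>w. length w = N \<and> gapok S (u @ w @ v)" if gu: "gapok S u" and gv: "gapok S v" for u v
  proof (cases "True \<in> set u \<and> True \<in> set v")
    case False
    define w where "w = replicate N False"
    have "gapok S (u @ w @ v)"
    proof (cases "True \<in> set u")
      case True
      hence "True \<notin> set v" using False by simp
      hence "True \<notin> set (w @ v)" by (simp add: w_def)
      thus ?thesis using gapok_right_zero[OF _ gu] by simp
    next
      case F: False
      hence "True \<notin> set (u @ w)" by (simp add: w_def)
      thus ?thesis using gapok_left_zero[OF _ gv, of "u @ w"] by simp
    qed
    thus ?thesis by (intro exI[of _ w]) (simp add: w_def)
  next
    case True
    then obtain u1 a where u: "u = u1 @ True # replicate a False" using decomp_last by blast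
    from True obtain b v1 where v: "v = replicate b False @ True # v1" using decomp_first by blast
    obtain m' where m': "M = D * m'" using DM by auto
    define d1 where "d1 = M - a mod D"
    define d2 where "d2 = M - b mod D"
    have amod: "a mod D < D" "b mod D < D" using D by auto
    have d1M: "d1 \<le> M" "d2 \<le> M" by (auto simp: d1_def d2_def)
    define g1 where "g1 = a + d1"
    define g2 where "g2 = b + d2"
    have g1: "g1 = M + D * (a div D)"
    proof -
      have "a mod D \<le> a" by simp
      moreover have "a mod D \<le> M" using amod(1) MD by linarith
      ultimately have "g1 = M + (a - a mod D)" unfolding g1_def d1_def by linarith
      thus ?thesis by (simp add: minus_mod_eq_div_mult)
    qed
    have g2: "g2 = M + D * (b div D)"
    proof -
      have "b mod D \<le> b" by simp
      moreover have "b mod D \<le> M" using amod(2) MD by linarith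
      ultimately have "g2 = M + (b - b mod D)" unfolding g2_def d2_def by linarith
      thus ?thesis by (simp add: minus_mod_eq_div_mult)
    qed
    define X where "X = N - 1 - d1 - d2"
    define t where "t = X mod D + D"
    have tle: "t \<le> 2 * D" using D by (simp add: t_def)
    have Xge: "X \<ge> 2 * D * (M + 1)" using d1M by (simp add: X_def N_def)
    have "t * (M + 1) \<le> 2 * D * (M + 1)" by (rule mult_right_mono[OF tle]) simp
    hence tX: "t * (M + 1) \<le> X" using Xge by linarith
    have Xdec: "X = D * (X div D) + X mod D" by simp
    have tM: "t * (M + 1) = t * M + X mod D + D" by (simp add: t_def algebra_simps)
    have "X - t * (M + 1) = D * (X div D) - D - t * M" using tX tM Xdec by linarith
    also have "\<dots> = D * (X div D - 1 - t * m')" by (simp add: m' diff_mult_distrib2 mult.left_commute)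
    finally obtain j where j: "X - t * (M + 1) = D * j" by blast
    have t1: "t \<ge> 1" using D by (simp add: t_def)
    define ms where "ms = (M + D * j) # replicate (t - 1) M"
    define f where "f = (\<lambda>s::nat. replicate s False @ [True])"
    define w where "w = replicate d1 False @ True # concat (map f ms) @ replicate d2 False"
    have lms: "length (concat (map f ms)) = t * (M + 1) + D * j"
    proof -
      have "length (concat (map f ms)) = M + D * j + 1 + (t - 1) * (M + 1)"
        using len_concat_rep[of "t - 1" M] by (simp add: ms_def f_def)
      also have "\<dots> = t * (M + 1) + D * j" using t1 by (cases t) (auto simp: algebra_simps)
      finally show ?thesis .
    qed
    have lw: "length w = N" using lms j tX d1M unfolding w_def X_def N_def by simp
    define Y where "Y = replicate a False @ w @ replicate b False"
    have Yeq: "True # Y @ [True] = chain (g1 # ms @ [g2])"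
      by (simp add: chain_def Y_def w_def f_def g1_def g2_def replicate_add[symmetric] add.commute)
    have ssS: "set (g1 # ms @ [g2]) \<subseteq> S" using ES[of "a div D"] ES[of "b div D"] ES[of j] ES[of 0]
      by (auto simp: g1 g2 ms_def)
    have gY: "gapok S ((True # Y) @ [True])" using gapok_chain[OF ssS] Yeq by simp
    have gv1: "gapok S (True # v1)" using gv v gapok_suffix by metis
    have gYv: "gapok S (True # Y @ True # v1)" using gapok_glue[OF gY gv1] by simp
    have gu1: "gapok S (u1 @ [True])" using gu u gapok_prefix[of S "u1 @ [True]"] by simp
    have "u @ w @ v = u1 @ True # (Y @ True # v1)" by (simp add: u v Y_def)
    hence "gapok S (u @ w @ v)" using gapok_glue[OF gu1 gYv] by simp
    thus ?thesis using lw by blast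
  qed
  show ?thesis unfolding has_specification_def words_gap words_n_gap
  proof (intro exI[of _ N] conjI ballI)
    show "1 \<le> N" by (simp add: N_def)
    fix u v assume "u \<in> {w. gapok S w}" "v \<in> {w. gapok S w}"
    then obtain w where w: "length w = N" "gapok S (u @ w @ v)" using main by blast
    hence "gapok S w" using gapok_prefix gapok_suffix by metis
    thus "\<exists>w\<in>{w. length w = N \<and> gapok S w}. u @ w @ v \<in> {w. gapok S w}" using w by blast
  qed
qed



definition G :: "nat set \<Rightarrow> nat \<Rightarrow> bool list set" where
  "G S n = {w. length w = n \<and> gapok S w}"
definition Wd :: "nat set \<Rightarrow> nat \<Rightarrow> bool list set" where
  "Wd S m = {w. length w = Suc m \<and> gapok S w \<and> hd w \<and> last w}"
definition cnt :: "nat set \<Rightarrow> nat \<Rightarrow> nat" where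
  "cnt S m = card (Wd S m)"

lemma finite_G: "finite (G S n)"
proof -
  have "G S n \<subseteq> {w. set w \<subseteq> UNIV \<and> length w = n}" by (auto simp: G_def)
  thus ?thesis using finite_lists_length_eq[of "UNIV :: bool set" n] finite_subset by auto
qed

lemma finite_Wd: "finite (Wd S m)"
proof -
  have "Wd S m \<subseteq> G S (Suc m)" by (auto simp: G_def Wd_def)
  thus ?thesis using finite_subset[OF _ finite_G] by blast
qed

lemma rep_True_inj: "replicate s False @ True # x = replicate s' False @ True # y \<Longrightarrow> s = s' \<and> x = y"
proof (induction s arbitrary: s')
  case 0 thus ?case by (cases s') auto
next
  case (Suc s) thus ?case by (cases s') auto
qed

lemma Wd_0: "Wd S 0 = {[True]}"
  by (auto simp: Wd_def gapok_def length_Suc_conv)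

lemma Wd_rec: assumes "0 < m"
  shows "Wd S m = (\<Union>s\<in>S\<inter>{..<m}. (\<lambda>w'. True # replicate s False @ w') ` Wd S (m - s - 1))"
proof (intro set_eqI iffI)
  fix w assume w: "w \<in> Wd S m"
  then obtain w2 where w2: "w = True # w2" by (cases w) (auto simp: Wd_def)
  have "w2 \<noteq> []" using w w2 assms by (auto simp: Wd_def)
  hence "True \<in> set w2" using w w2 by (auto simp: Wd_def) (metis last_in_set)
  then obtain s w' where sw: "w2 = replicate s False @ True # w'" using decomp_first by blast
  have gw: "gapok S w" using w by (simp add: Wd_def)
  have "(s + 1) - 0 - 1 \<in> S"
  proof (rule gapokD[OF gw])
    fix k assume "0 < k" "k < s + 1"
    thus "\<not> w ! k" by (simp add: w2 sw nth_append nth_Cons')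
  qed (use w in \<open>auto simp: w2 sw nth_append Wd_def\<close>)
  hence sS: "s \<in> S" by simp
  have lw: "length w = Suc m" using w by (simp add: Wd_def)
  hence sm: "s < m" using sw w2 by simp
  have "True # w' \<in> Wd S (m - s - 1)"
  proof -
    have "w = (True # replicate s False) @ (True # w')" by (simp add: w2 sw)
    hence "gapok S (True # w')" using gw gapok_suffix by metis
    moreover have "last (True # w') = last w" by (simp add: w2 sw)
    ultimately show ?thesis using w lw sm by (auto simp: Wd_def w2 sw)
  qed
  moreover have "w = True # replicate s False @ True # w'" by (simp add: w2 sw)
  ultimately show "w \<in> (\<Union>s\<in>S\<inter>{..<m}. (\<lambda>w'. True # replicate s False @ w') ` Wd S (m - s - 1))"
    using sS sm by blast
next
  fix w assume "w \<in> (\<Union>s\<in>S\<inter>{..<m}. (\<lambda>w'. True # replicate s False @ w') ` Wd S (m - s - 1))"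
  then obtain s w' where s: "s \<in> S" "s < m" and w': "w' \<in> Wd S (m - s - 1)"
    and w: "w = True # replicate s False @ w'" by blast
  obtain w'' where w'': "w' = True # w''" using w' by (cases w') (auto simp: Wd_def)
  have "gapok S ((True # replicate s False) @ True # w'')"
    by (rule gapok_glue) (use gapok_block[OF s(1)] w' w'' in \<open>auto simp: Wd_def\<close>)
  thus "w \<in> Wd S m" using w' s by (auto simp: Wd_def w w'')
qed

lemma cnt_0: "cnt S 0 = 1" by (simp add: cnt_def Wd_0)

lemma cnt_rec: assumes "0 < m"
  shows "cnt S m = (\<Sum>s\<in>S\<inter>{..<m}. cnt S (m - s - 1))"
proof -
  have "cnt S m = card (\<Union>s\<in>S\<inter>{..<m}. (\<lambda>w'. True # replicate s False @ w') ` Wd S (m - s - 1))"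
    unfolding cnt_def using Wd_rec[OF assms] by simp
  also have "\<dots> = (\<Sum>s\<in>S\<inter>{..<m}. card ((\<lambda>w'. True # replicate s False @ w') ` Wd S (m - s - 1)))"
  proof (rule card_UN_disjoint)
    show "\<forall>i\<in>S \<inter> {..<m}. \<forall>j\<in>S \<inter> {..<m}. i \<noteq> j \<longrightarrow>
      (\<lambda>w'. True # replicate i False @ w') ` Wd S (m - i - 1) \<inter> (\<lambda>w'. True # replicate j False @ w') ` Wd S (m - j - 1) = {}"
    proof (intro ballI impI)
      fix i j :: nat assume "i \<noteq> j"
      show "(\<lambda>w'. True # replicate i False @ w') ` Wd S (m - i - 1) \<inter> (\<lambda>w'. True # replicate j False @ w') ` Wd S (m - j - 1) = {}"
      proof (rule ccontr)
        assume "\<not> ?thesis"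
        then obtain x y where x: "x \<in> Wd S (m - i - 1)" and y: "y \<in> Wd S (m - j - 1)"
          and e: "True # replicate i False @ x = True # replicate j False @ y" by blast
        obtain x' where "x = True # x'" using x by (cases x) (auto simp: Wd_def)
        moreover obtain y' where "y = True # y'" using y by (cases y) (auto simp: Wd_def)
        ultimately show False using e rep_True_inj[of i x' j y'] \<open>i \<noteq> j\<close> by simp
      qed
    qed
  qed (auto simp: finite_Wd)
  also have "\<dots> = (\<Sum>s\<in>S\<inter>{..<m}. cnt S (m - s - 1))"
    by (rule sum.cong) (auto simp: cnt_def card_image inj_on_def)
  finally show ?thesis .
qed

lemma cnt_supermult: "cnt S m1 * cnt S m2 \<le> cnt S (m1 + m2)"
proof -
  define f where "f = (\<lambda>(u::bool list, v::bool list). butlast u @ v)"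
  have "inj_on f (Wd S m1 \<times> Wd S m2)"
  proof (rule inj_onI)
    fix p p' assume p: "p \<in> Wd S m1 \<times> Wd S m2" and p': "p' \<in> Wd S m1 \<times> Wd S m2" and e: "f p = f p'"
    obtain u v u' v' where pp: "p = (u, v)" "p' = (u', v')" by (cases p, cases p')
    have l: "length (butlast u) = m1" "length (butlast u') = m1" "u \<noteq> []" "u' \<noteq> []" "last u" "last u'"
      using p p' pp by (auto simp: Wd_def)
    have "butlast u = butlast u'" "v = v'" using e l by (auto simp: f_def pp append_eq_append_conv)
    moreover have "u = butlast u @ [True]" "u' = butlast u' @ [True]" using l
      by (metis append_butlast_last_id)+
    ultimately show "p = p'" using pp by metis
  qed
  moreover have "f ` (Wd S m1 \<times> Wd S m2) \<subseteq> Wd S (m1 + m2)"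
  proof safe
    fix u v assume u: "u \<in> Wd S m1" and v: "v \<in> Wd S m2"
    have uu: "u = butlast u @ [True]" using u by (auto simp: Wd_def) (metis append_butlast_last_id list.size(3) nat.distinct(1))
    obtain v' where vv: "v = True # v'" using v by (cases v) (auto simp: Wd_def)
    have g: "gapok S (butlast u @ True # v')"
      by (rule gapok_glue) (use u v uu vv in \<open>auto simp: Wd_def\<close>)
    have "hd (butlast u @ True # v')"
    proof (cases "butlast u")
      case (Cons x xs)
      hence "hd u = x" using uu by (metis append_Cons list.sel(1))
      thus ?thesis using u Cons by (simp add: Wd_def)
    qed simp
    moreover have "last (butlast u @ True # v')" using v vv by (simp add: Wd_def)
    moreover have "length (butlast u @ True # v') = Suc (m1 + m2)" using u v vv by (auto simp: Wd_def)
    ultimately show "f (u, v) \<in> Wd S (m1 + m2)" using g by (simp add: f_def vv Wd_def)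
  qed
  ultimately have "card (Wd S m1 \<times> Wd S m2) \<le> card (Wd S (m1 + m2))"
    using card_inj_on_le finite_Wd by blast
  thus ?thesis by (simp add: cnt_def card_cartesian_product)
qed

lemma G_lower: assumes "m < n" shows "cnt S m \<le> card (G S n)"
proof -
  define f where "f = (\<lambda>w. replicate (n - m - 1) False @ w)"
  have "inj_on f (Wd S m)" by (auto simp: f_def inj_on_def)
  moreover have "f ` Wd S m \<subseteq> G S n" using assms
    by (auto simp: f_def G_def Wd_def intro!: gapok_left_zero)
  ultimately show ?thesis unfolding cnt_def using card_inj_on_le finite_G by blast
qed

lemma G_upper: "card (G S n) \<le> 1 + (\<Sum>a<n. \<Sum>m<n. cnt S m)"
proof -
  define U where "U = (\<Union>a<n. \<Union>m<n. (\<lambda>w. replicate a False @ w @ replicate (n - a - m - 1) False) ` Wd S m)"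
  have "G S n \<subseteq> {replicate n False} \<union> U"
  proof
    fix w assume w: "w \<in> G S n"
    show "w \<in> {replicate n False} \<union> U"
    proof (cases "True \<in> set w")
      case False
      hence "w = replicate n False" using w by (auto simp: G_def intro!: replicate_length_same[symmetric])
      thus ?thesis by simp
    next
      case True
      then obtain w0 b where wb: "w = w0 @ True # replicate b False" using decomp_last by blast
      obtain a w1 where aw: "w0 @ [True] = replicate a False @ True # w1"
        using decomp_first[of "w0 @ [True]"] by auto
      define mid where "mid = True # w1"
      have we: "w = replicate a False @ mid @ replicate b False"
        using wb aw by (simp add: mid_def)
      have gw: "gapok S w" using w by (simp add: G_def)
      have gm: "gapok S mid" using gw we gapok_prefix gapok_suffix by metis
      have "last mid"
      proof -
        have "last (w0 @ [True])" by simp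
        thus ?thesis using aw by (simp add: mid_def)
      qed
      moreover have "length w = n" using w by (simp add: G_def)
      ultimately have "mid \<in> Wd S (length w1)" "length w1 < n" "a < n"
        "b = n - a - length w1 - 1"
        using gm we by (auto simp: Wd_def mid_def)
      thus ?thesis unfolding U_def using we by blast
    qed
  qed
  hence "card (G S n) \<le> card ({replicate n False} \<union> U)"
    by (rule card_mono[rotated]) (auto simp: U_def finite_Wd)
  also have "\<dots> \<le> 1 + card U" using card_Un_le[of "{replicate n False}" U] by simp
  also have "card U \<le> (\<Sum>a<n. card (\<Union>m<n. (\<lambda>w. replicate a False @ w @ replicate (n - a - m - 1) False) ` Wd S m))"
    unfolding U_def by (rule card_UN_le) simp
  also have "\<dots> \<le> (\<Sum>a<n. \<Sum>m<n. cnt S m)"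
  proof (rule sum_mono)
    fix a
    have "card (\<Union>m<n. (\<lambda>w. replicate a False @ w @ replicate (n - a - m - 1) False) ` Wd S m)
      \<le> (\<Sum>m<n. card ((\<lambda>w. replicate a False @ w @ replicate (n - a - m - 1) False) ` Wd S m))"
      by (rule card_UN_le) simp
    also have "\<dots> \<le> (\<Sum>m<n. cnt S m)" unfolding cnt_def by (rule sum_mono) (rule card_image_le[OF finite_Wd])
    finally show "card (\<Union>m<n. (\<lambda>w. replicate a False @ w @ replicate (n - a - m - 1) False) ` Wd S m)
      \<le> (\<Sum>m<n. cnt S m)" .
  qed
  finally show ?thesis by simp
qed



definition ind :: "real \<Rightarrow> nat set \<Rightarrow> nat \<Rightarrow> real" where
  "ind r A n = (if n \<in> A then r ^ Suc n else 0)"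
definition sig :: "real \<Rightarrow> nat set \<Rightarrow> real" where
  "sig r A = suminf (ind r A)"

lemma ind_nonneg: "0 \<le> r \<Longrightarrow> 0 \<le> ind r A n" by (simp add: ind_def)

lemma summable_ind: assumes "0 \<le> r" "r < 1" shows "summable (ind r A)"
proof (rule summable_comparison_test'[where g="\<lambda>n. r * r ^ n"])
  show "summable (\<lambda>n. r * r ^ n)" using assms by (intro summable_mult summable_geometric) simp
  fix n show "norm (ind r A n) \<le> r * r ^ n" using assms by (simp add: ind_def)
qed

lemma partial_le_sig: assumes "0 \<le> r" "r < 1" shows "(\<Sum>n<m. ind r A n) \<le> sig r A"
  unfolding sig_def by (rule sum_le_suminf[OF summable_ind[OF assms]]) (auto simp: ind_nonneg assms)

lemma sum_ind: "(\<Sum>s\<in>A\<inter>{..<m}. r ^ Suc s) = (\<Sum>n<m. ind r A n)"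
proof -
  have "(\<Sum>s\<in>A\<inter>{..<m}. r ^ Suc s) = (\<Sum>s\<in>{..<m}\<inter>A. r ^ Suc s)" by (simp add: Int_commute)
  also have "\<dots> = (\<Sum>n<m. ind r A n)" unfolding sum.inter_restrict[OF finite_lessThan] ind_def by (rule sum.cong) auto
  finally show ?thesis .
qed

lemma cnt_upper: assumes r: "0 < r" "r < 1" and sS: "sig r S \<le> 1"
  shows "real (cnt S m) \<le> (1/r) ^ m"
proof (induction m rule: less_induct)
  case (less m)
  show ?case
  proof (cases "m = 0")
    case True thus ?thesis by (simp add: cnt_0)
  next
    case False
    have "real (cnt S m) = (\<Sum>s\<in>S\<inter>{..<m}. real (cnt S (m - s - 1)))"
      using cnt_rec[of m S] False by simp
    also have "\<dots> \<le> (\<Sum>s\<in>S\<inter>{..<m}. (1/r) ^ m * r ^ Suc s)"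
    proof (rule sum_mono)
      fix s assume s: "s \<in> S \<inter> {..<m}"
      have "real (cnt S (m - s - 1)) \<le> (1/r) ^ (m - s - 1)" using less s False by auto
      also have "(1/r) ^ (m - s - 1) = (1/r) ^ m * r ^ Suc s"
      proof -
        have "m = (m - s - 1) + Suc s" using s by auto
        hence "(1/r) ^ m * r ^ Suc s = (1/r) ^ (m - s - 1) * ((1/r) ^ Suc s * r ^ Suc s)"
          by (metis power_add mult.assoc)
        also have "(1/r) ^ Suc s * r ^ Suc s = 1" using r by (simp add: power_mult_distrib[symmetric])
        finally show ?thesis by simp
      qed
      finally show "real (cnt S (m - s - 1)) \<le> (1/r) ^ m * r ^ Suc s" .
    qed
    also have "\<dots> = (1/r) ^ m * (\<Sum>s\<in>S\<inter>{..<m}. r ^ Suc s)" by (simp add: sum_distrib_left)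
    also have "\<dots> \<le> (1/r) ^ m * 1"
    proof (rule mult_left_mono)
      have "(\<Sum>s\<in>S\<inter>{..<m}. r ^ Suc s) = (\<Sum>n<m. ind r S n)" by (rule sum_ind)
      also have "\<dots> \<le> sig r S" by (rule partial_le_sig) (use r in auto)
      finally have "(\<Sum>s\<in>S\<inter>{..<m}. r ^ Suc s) \<le> sig r S" .
      thus "(\<Sum>s\<in>S\<inter>{..<m}. r ^ Suc s) \<le> 1" using sS by simp
    qed (use r in simp)
    finally show ?thesis by simp
  qed
qed



lemma cnt_lower_exists:
  assumes r: "0 < r" "r < 1" and sS: "sig r S = 1" and mu: "0 < \<mu>" "\<mu> < 1/r"
  shows "\<exists>m0\<ge>1. \<mu> ^ m0 \<le> real (cnt S m0)"
proof (rule ccontr)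
  assume "\<not> ?thesis"
  hence lt: "\<And>m. m \<ge> 1 \<Longrightarrow> real (cnt S m) < \<mu> ^ m" by (meson not_le)
  have cb: "real (cnt S m) \<le> \<mu> ^ m" for m
    using lt[of m] by (cases "m = 0") (auto simp: cnt_0)
  define z where "z = (r + 1/\<mu>) / 2"
  have rmu: "r < 1/\<mu>" using mu r by (simp add: field_simps)
  have z: "r < z" "z < 1/\<mu>" "0 < z" using rmu r by (auto simp: z_def)
  have muz: "\<mu> * z < 1" "0 \<le> \<mu> * z" using z mu by (auto simp: field_simps)
  have "S \<noteq> {}"
  proof
    assume "S = {}" hence "ind r S = (\<lambda>n. 0)" by (auto simp: ind_def)
    thus False using sS by (simp add: sig_def)
  qed
  then obtain s0 where s0: "s0 \<in> S" by blast
  define \<delta> where "\<delta> = z ^ Suc s0 - r ^ Suc s0"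
  have "r ^ Suc s0 < z ^ Suc s0" by (rule power_strict_mono) (use z r in auto)
  hence dpos: "0 < \<delta>" unfolding \<delta>_def by simp
  have "(\<lambda>n. \<Sum>i<n. ind r S i) \<longlonglongrightarrow> 1"
    using summable_LIMSEQ[OF summable_ind[of r S]] r sS by (simp add: sig_def)
  hence "eventually (\<lambda>n. 1 - \<delta> < (\<Sum>i<n. ind r S i)) sequentially"
    using dpos by (intro order_tendstoD(1)) auto
  then obtain L0 where L0: "\<And>n. n \<ge> L0 \<Longrightarrow> 1 - \<delta> < (\<Sum>i<n. ind r S i)"
    unfolding eventually_sequentially by blast
  define Lb where "Lb = max L0 (Suc s0)"
  define F where "F = S \<inter> {..<Lb}"
  have Lb1: "Lb \<ge> 1" by (simp add: Lb_def)
  have s0F: "s0 \<in> F" by (simp add: F_def Lb_def s0)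
  have finF: "finite F" by (simp add: F_def)
  have FL: "1 \<le> (\<Sum>s\<in>F. z ^ Suc s)"
  proof -
    have "(\<Sum>s\<in>F. r ^ Suc s) = (\<Sum>i<Lb. ind r S i)" unfolding F_def by (rule sum_ind)
    hence a: "1 - \<delta> < (\<Sum>s\<in>F. r ^ Suc s)" using L0[of Lb] by (simp add: Lb_def)
    have "\<delta> \<le> (\<Sum>s\<in>F. z ^ Suc s - r ^ Suc s)"
      unfolding \<delta>_def by (rule member_le_sum[OF s0F _ finF]) (use z r in \<open>auto intro!: mult_mono power_mono simp del: power_Suc\<close>)
    thus ?thesis using a by (simp add: sum_subtractf)
  qed
  define H where "H = (\<lambda>N. \<Sum>m\<le>N. real (cnt S m) * z ^ m)"
  have Hnn: "0 \<le> H N" for N unfolding H_def using z by (intro sum_nonneg) auto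
  have Hmono: "H N \<le> H N'" if "N \<le> N'" for N N'
    unfolding H_def using that z by (intro sum_mono2) auto
  have Hbound: "H N \<le> 1 / (1 - \<mu> * z)" for N
  proof -
    have "H N \<le> (\<Sum>m\<le>N. (\<mu> * z) ^ m)" unfolding H_def power_mult_distrib
      using cb z by (intro sum_mono mult_right_mono) auto
    also have "\<dots> \<le> (\<Sum>m. (\<mu> * z) ^ m)"
      by (rule sum_le_suminf) (use muz in \<open>auto intro: summable_geometric\<close>)
    also have "\<dots> = 1 / (1 - \<mu> * z)" using muz by (subst suminf_geometric) auto
    finally show ?thesis .
  qed
  have Hrec: "1 + H (N - Lb) \<le> H N" if NL: "Lb \<le> N" for N
  proof -
    define g where "g = (\<lambda>s m. real (cnt S (m - s - 1)) * z ^ m)"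
    have "{..N} = insert 0 {1..N}" by auto
    hence "H N = 1 + (\<Sum>m\<in>{1..N}. real (cnt S m) * z ^ m)" unfolding H_def by (simp add: cnt_0)
    also have "(\<Sum>m\<in>{1..N}. real (cnt S m) * z ^ m) = (\<Sum>m\<in>{1..N}. \<Sum>s\<in>S\<inter>{..<m}. g s m)"
      unfolding g_def by (intro sum.cong refl) (simp add: cnt_rec sum_distrib_right)
    finally have e1: "H N = 1 + (\<Sum>m\<in>{1..N}. \<Sum>s\<in>S\<inter>{..<m}. g s m)" .
    have e2: "(\<Sum>m\<in>{1..N}. \<Sum>s\<in>{s. s \<in> F \<and> s < m}. g s m) \<le> (\<Sum>m\<in>{1..N}. \<Sum>s\<in>S\<inter>{..<m}. g s m)"
      unfolding g_def using z by (intro sum_mono sum_mono2) (auto simp: F_def)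
    have "(\<Sum>m\<in>{1..N}. \<Sum>s\<in>{s. s \<in> F \<and> s < m}. g s m) = (\<Sum>s\<in>F. \<Sum>m\<in>{m. m \<in> {1..N} \<and> s < m}. g s m)"
      by (rule sum.swap_restrict[symmetric]) (auto simp: finF)
    also have "\<dots> = (\<Sum>s\<in>F. z ^ Suc s * H (N - s - 1))"
    proof (rule sum.cong[OF refl])
      fix s assume sF: "s \<in> F"
      hence sN: "s < N" using NL by (auto simp: F_def)
      have "{m. m \<in> {1..N} \<and> s < m} = {0 + Suc s..(N - s - 1) + Suc s}" using sN by auto
      hence "(\<Sum>m\<in>{m. m \<in> {1..N} \<and> s < m}. g s m) = (\<Sum>i\<in>{0..N - s - 1}. g s (i + Suc s))"
        by (simp only: sum.shift_bounds_cl_nat_ivl)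
      also have "\<dots> = (\<Sum>i\<le>N - s - 1. z ^ Suc s * (real (cnt S i) * z ^ i))"
        by (intro sum.cong) (auto simp: g_def power_add)
      finally show "(\<Sum>m\<in>{m. m \<in> {1..N} \<and> s < m}. g s m) = z ^ Suc s * H (N - s - 1)"
        by (simp add: H_def sum_distrib_left)
    qed
    finally have e3: "(\<Sum>m\<in>{1..N}. \<Sum>s\<in>{s. s \<in> F \<and> s < m}. g s m) = (\<Sum>s\<in>F. z ^ Suc s * H (N - s - 1))" .
    have e4: "(\<Sum>s\<in>F. z ^ Suc s * H (N - Lb)) \<le> (\<Sum>s\<in>F. z ^ Suc s * H (N - s - 1))"
      using z by (intro sum_mono mult_left_mono Hmono) (auto simp: F_def)
    have "(\<Sum>s\<in>F. z ^ Suc s * H (N - Lb)) = H (N - Lb) * (\<Sum>s\<in>F. z ^ Suc s)"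
      by (simp add: sum_distrib_left mult.commute)
    also have "\<dots> \<ge> H (N - Lb)" using FL Hnn[of "N - Lb"] by (simp add: mult_le_cancel_left1)
    finally have e5: "H (N - Lb) \<le> (\<Sum>s\<in>F. z ^ Suc s * H (N - Lb))" .
    show ?thesis using e1 e2 e3 e4 e5 by linarith
  qed
  have Hk: "real k \<le> H (k * Lb)" for k
  proof (induction k)
    case 0 thus ?case using Hnn by simp
  next
    case (Suc k)
    have "1 + H (Suc k * Lb - Lb) \<le> H (Suc k * Lb)" by (rule Hrec) simp
    thus ?case using Suc by simp
  qed
  obtain k :: nat where "1 / (1 - \<mu> * z) < k" using reals_Archimedean2 by blast
  thus False using Hk[of k] Hbound[of "k * Lb"] by simp
qed



lemma cnt_pow: "cnt S m0 ^ k \<le> cnt S (k * m0)"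
proof (induction k)
  case 0 thus ?case by (simp add: cnt_0)
next
  case (Suc k)
  have "cnt S m0 ^ Suc k = cnt S m0 ^ k * cnt S m0" by simp
  also have "\<dots> \<le> cnt S (k * m0) * cnt S m0" using Suc by simp
  also have "\<dots> \<le> cnt S (k * m0 + m0)" by (rule cnt_supermult)
  finally show ?case by (simp add: add.commute)
qed

lemma card_G_ge1: "1 \<le> card (G S n)"
proof -
  have "replicate n False \<in> G S n" by (auto simp: G_def intro!: gapok_no_true)
  hence "0 < card (G S n)" using finite_G[of S n] by (auto simp: card_gt_0_iff)
  thus ?thesis by simp
qed

lemma entropy_gap:
  assumes r: "0 < r" "r < 1" and sS: "sig r S = 1"
  shows "entropy (gap_shift S) = - log 2 r"
proof -
  define Q where "Q = - log 2 r"
  define lam where "lam = 1 / r"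
  have lam1: "1 \<le> lam" using r by (simp add: lam_def)
  have lamQ: "log 2 lam = Q" using r by (simp add: lam_def Q_def log_divide)
  have lampow: "lam = 2 powr Q" using powr_log_cancel[of 2 lam] lamQ lam1 by simp
  define f where "f = (\<lambda>n. log 2 (real (card (words_n (gap_shift S) n))) / real n)"
  have fG: "f n = log 2 (real (card (G S n))) / real n" for n
    by (simp add: f_def words_n_gap G_def)
  have Cpos: "0 < real (card (G S n))" for n using card_G_ge1[of S n] by simp
  have fnn: "0 \<le> f n" for n using card_G_ge1[of S n] by (simp add: fG)
  have upper: "f n \<le> (1 + 2 * log 2 (real n)) / real n + Q" if n1: "n \<ge> 1" for n
  proof -
    have "real (card (G S n)) \<le> 1 + (\<Sum>a<n. \<Sum>m<n. real (cnt S m))"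
    proof -
      have "real (card (G S n)) \<le> real (1 + (\<Sum>a<n. \<Sum>m<n. cnt S m))"
        using G_upper[of S n] by (simp only: of_nat_le_iff)
      thus ?thesis by (simp only: of_nat_add of_nat_sum of_nat_1)
    qed
    also have "\<dots> \<le> 1 + (\<Sum>a<n. \<Sum>m<n. lam ^ n)"
    proof -
      have "real (cnt S m) \<le> lam ^ n" if "m < n" for m
      proof -
        have "real (cnt S m) \<le> lam ^ m" unfolding lam_def by (rule cnt_upper) (use r sS in auto)
        also have "\<dots> \<le> lam ^ n" using that lam1 by (intro power_increasing) auto
        finally show ?thesis .
      qed
      thus ?thesis by (intro add_left_mono sum_mono) auto
    qed
    also have "\<dots> = 1 + real n * real n * lam ^ n" by simp
    also have "\<dots> \<le> 2 * real n ^ 2 * lam ^ n"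
    proof -
      have "1 \<le> real n" using n1 by simp
      hence "1 \<le> real n * real n" using mult_mono[of 1 "real n" 1 "real n"] by simp
      moreover have "1 \<le> lam ^ n" using lam1 by simp
      ultimately have "1 \<le> real n * real n * lam ^ n" using mult_mono[of 1 "real n * real n" 1 "lam ^ n"] by simp
      thus ?thesis by (simp add: power2_eq_square)
    qed
    finally have cb: "real (card (G S n)) \<le> 2 * real n ^ 2 * lam ^ n" .
    have npos: "0 < real n" using n1 by simp
    have "log 2 (real (card (G S n))) \<le> log 2 (2 * real n ^ 2 * lam ^ n)"
      using cb Cpos[of n] npos lam1 by (subst log_le_cancel_iff) auto
    also have "\<dots> = 1 + 2 * log 2 (real n) + real n * Q"
      using npos lam1 by (simp add: log_mult log_nat_power lamQ)
    finally have "log 2 (real (card (G S n))) \<le> 1 + 2 * log 2 (real n) + real n * Q" .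
    hence "f n \<le> (1 + 2 * log 2 (real n) + real n * Q) / real n" unfolding fG using npos
      by (simp add: divide_right_mono)
    also have "\<dots> = (1 + 2 * log 2 (real n)) / real n + Q" using npos by (simp add: field_simps)
    finally show ?thesis .
  qed
  have hlim: "(\<lambda>n. (1 + 2 * log 2 (real n)) / real n + Q) \<longlonglongrightarrow> 0 + Q"
  proof (rule tendsto_add[OF _ tendsto_const])
    have "(\<lambda>n. 1 / real n + (2 / ln 2) * (ln (real n) / real n)) \<longlonglongrightarrow> 0 + (2 / ln 2) * 0"
      by (intro tendsto_add tendsto_mult tendsto_const lim_1_over_n lim_ln_over_n)
    moreover have "(1 + 2 * log 2 (real n)) / real n = 1 / real n + (2 / ln 2) * (ln (real n) / real n)" for n
      by (cases "n = 0") (simp_all add: log_def field_simps)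
    ultimately show "(\<lambda>n. (1 + 2 * log 2 (real n)) / real n) \<longlonglongrightarrow> 0" by simp
  qed
  have lower: "eventually (\<lambda>n. a < f n) sequentially" if aQ: "a < Q" for a
  proof (cases "Q - (Q - a) / 2 \<le> 0")
    case True
    hence "Q + a \<le> 0" by (simp add: field_simps)
    hence "a < 0" using aQ by linarith
    hence "\<And>n. a < f n" using fnn by (meson less_le_trans)
    thus ?thesis by simp
  next
    case False
    define e where "e = Q - (Q - a) / 2"
    have epos: "0 < e" using False by (simp add: e_def)
    have ea: "a < e" using aQ by (simp add: e_def field_simps)
    have eQ: "e < Q" using aQ by (simp add: e_def field_simps)
    define mu where "mu = 2 powr e"
    have mu: "0 < mu" "mu < 1 / r" using eQ unfolding mu_def lam_def[symmetric] lampow by auto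
    obtain m0 where m0: "m0 \<ge> 1" "mu ^ m0 \<le> real (cnt S m0)"
      using cnt_lower_exists[OF r sS mu] by blast
    have lmu: "log 2 mu = e" by (simp add: mu_def)
    have lb: "e - real m0 * e / real n \<le> f n" if n: "n > m0" for n
    proof -
      define k where "k = (n - 1) div m0"
      have km: "k * m0 < n"
      proof -
        have "k * m0 \<le> n - 1" unfolding k_def by (rule div_times_less_eq_dividend)
        thus ?thesis using n by linarith
      qed
      have "(n - 1) = k * m0 + (n - 1) mod m0" by (simp add: k_def)
      moreover have "(n - 1) mod m0 < m0" using m0(1) by simp
      ultimately have kmn: "real n - real m0 \<le> real (k * m0)" using n by linarith
      have "mu ^ (k * m0) = (mu ^ m0) ^ k" by (metis power_mult mult.commute)
      also have "\<dots> \<le> real (cnt S m0) ^ k" using m0 mu by (intro power_mono) auto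
      also have "\<dots> \<le> real (cnt S (k * m0))" using cnt_pow[of S m0 k] by (simp flip: of_nat_power)
      also have "\<dots> \<le> real (card (G S n))" using G_lower[OF km, of S] by simp
      finally have cb: "mu ^ (k * m0) \<le> real (card (G S n))" .
      have "real (k * m0) * e \<le> log 2 (real (card (G S n)))"
      proof -
        have "log 2 (mu ^ (k * m0)) \<le> log 2 (real (card (G S n)))"
          using cb Cpos[of n] mu by (subst log_le_cancel_iff) auto
        thus ?thesis using mu by (simp add: log_nat_power lmu)
      qed
      moreover have "(real n - real m0) * e \<le> real (k * m0) * e" using kmn epos by (intro mult_right_mono) auto
      ultimately have "(real n - real m0) * e \<le> log 2 (real (card (G S n)))" by linarith
      moreover have npos: "0 < real n" using n by simp
      ultimately have "(real n - real m0) * e / real n \<le> f n" unfolding fG by (simp add: divide_right_mono)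
      moreover have "(real n - real m0) * e / real n = e - real m0 * e / real n" using npos by (simp add: field_simps)
      ultimately show ?thesis by simp
    qed
    have "(\<lambda>n. e - real m0 * e / real n) \<longlonglongrightarrow> e - 0"
      by (intro tendsto_diff tendsto_const lim_const_over_n)
    hence "eventually (\<lambda>n. a < e - real m0 * e / real n) sequentially"
      using ea by (intro order_tendstoD(1)) auto
    moreover have "eventually (\<lambda>n. n > m0) sequentially" by (rule eventually_gt_at_top)
    ultimately show ?thesis by eventually_elim (use lb in \<open>auto intro: less_le_trans\<close>)
  qed
  have upperE: "eventually (\<lambda>n. f n < a) sequentially" if aQ: "Q < a" for a
  proof -
    have "eventually (\<lambda>n. (1 + 2 * log 2 (real n)) / real n + Q < a) sequentially"
      using hlim aQ by (intro order_tendstoD(2)) auto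
    moreover have "eventually (\<lambda>n. n \<ge> 1) sequentially" by (rule eventually_ge_at_top)
    ultimately show ?thesis by eventually_elim (use upper in \<open>auto intro: le_less_trans\<close>)
  qed
  have "f \<longlonglongrightarrow> Q" by (rule order_tendstoI) (use lower upperE in auto)
  hence "lim f = Q" by (rule limI)
  thus ?thesis by (simp add: entropy_def f_def Q_def)
qed



lemma sig_nonneg: "0 \<le> r \<Longrightarrow> r < 1 \<Longrightarrow> 0 \<le> sig r A"
  unfolding sig_def by (rule suminf_nonneg[OF summable_ind]) (auto simp: ind_nonneg)

lemma sig_mono: assumes "0 \<le> r" "r < 1" "A \<subseteq> B" shows "sig r A \<le> sig r B"
  unfolding sig_def using assms
  by (intro suminf_le summable_ind) (auto simp: ind_def)

lemma sig_union: assumes "0 \<le> r" "r < 1" "A \<inter> B = {}" shows "sig r (A \<union> B) = sig r A + sig r B"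
proof -
  have "ind r (A \<union> B) = (\<lambda>n. ind r A n + ind r B n)" using assms(3) by (auto simp: ind_def fun_eq_iff)
  thus ?thesis unfolding sig_def using assms by (simp add: suminf_add[OF summable_ind summable_ind])
qed

lemma sig_union_le: assumes "0 \<le> r" "r < 1" shows "sig r (A \<union> B) \<le> sig r A + sig r B"
proof -
  have "sig r (A \<union> B) \<le> suminf (\<lambda>n. ind r A n + ind r B n)"
    unfolding sig_def using assms
    by (intro suminf_le summable_ind summable_add) (auto simp: ind_def)
  thus ?thesis unfolding sig_def using assms by (simp add: suminf_add[OF summable_ind summable_ind])
qed

lemma sig_single: "sig r {n} = r ^ Suc n"
proof -
  have "ind r {n} = (\<lambda>k. if k = n then r ^ Suc k else 0)" by (auto simp: ind_def fun_eq_iff)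
  thus ?thesis unfolding sig_def using sums_single[of n "\<lambda>k. r ^ Suc k"] sums_unique by metis
qed

lemma sig_atLeast: assumes "0 \<le> r" "r < 1" shows "sig r {n..} = r ^ Suc n / (1 - r)"
proof -
  have "(\<lambda>i. r ^ Suc n * r ^ i) sums (r ^ Suc n * (1 / (1 - r)))"
    by (rule sums_mult[OF geometric_sums]) (use assms in auto)
  moreover have "(\<lambda>i. ind r {n..} (i + n)) = (\<lambda>i. r ^ Suc n * r ^ i)"
    by (auto simp: ind_def fun_eq_iff power_add[symmetric] add.commute)
  moreover have "(\<Sum>i<n. ind r {n..} i) = 0" by (simp add: ind_def)
  ultimately have "ind r {n..} sums (r ^ Suc n / (1 - r))" using sums_iff_shift[of "ind r {n..}" n] by simp
  thus ?thesis unfolding sig_def using sums_unique by metis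
qed

primrec gps :: "real \<Rightarrow> nat set \<Rightarrow> real \<Rightarrow> nat \<Rightarrow> real" where
  "gps r P t 0 = 0"
| "gps r P t (Suc n) = gps r P t n + (if n \<in> P \<and> gps r P t n + r ^ Suc n \<le> t then r ^ Suc n else 0)"

lemma greedy:
  assumes r: "0 < r" "r < 1" and t: "0 \<le> t" "t \<le> sig r P"
    and pool: "\<And>p. p \<in> P \<Longrightarrow> r ^ Suc p \<le> sig r (P \<inter> {Suc p..})"
  shows "\<exists>B\<subseteq>P. sig r B = t"
proof -
  define ps where "ps = gps r P t"
  define B where "B = {n \<in> P. ps n + r ^ Suc n \<le> t}"
  define T where "T = (\<lambda>n. sig r (P \<inter> {n..}))"
  have Tstep: "T n = ind r P n + T (Suc n)" for n
  proof -
    have "P \<inter> {n..} = (P \<inter> {n}) \<union> (P \<inter> {Suc n..})" by auto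
    hence "T n = sig r (P \<inter> {n}) + T (Suc n)" unfolding T_def using r by (subst sig_union[symmetric]) auto
    moreover have "sig r (P \<inter> {n}) = ind r P n"
    proof (cases "n \<in> P")
      case True
      hence "P \<inter> {n} = {n}" by auto
      thus ?thesis using True by (simp add: sig_single ind_def)
    next
      case False
      hence "P \<inter> {n} = {}" by auto
      moreover have "ind r {} = (\<lambda>_. 0)" by (simp add: ind_def fun_eq_iff)
      ultimately show ?thesis using False by (simp add: sig_def ind_def)
    qed
    ultimately show ?thesis by simp
  qed
  have psB: "ps n = (\<Sum>j<n. ind r B j)" for n
    by (induction n) (auto simp: ps_def B_def ind_def)
  have inv: "0 \<le> t - ps n \<and> t - ps n \<le> T n" for n
  proof (induction n)
    case 0 thus ?case using t by (simp add: ps_def T_def)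
  next
    case (Suc n)
    show ?case
    proof (cases "n \<in> P \<and> ps n + r ^ Suc n \<le> t")
      case True
      hence "ps (Suc n) = ps n + r ^ Suc n" by (simp add: ps_def)
      moreover have "T n = r ^ Suc n + T (Suc n)" using Tstep[of n] True by (simp add: ind_def)
      ultimately show ?thesis using Suc True by simp
    next
      case False
      hence e: "ps (Suc n) = ps n" by (auto simp: ps_def)
      show ?thesis
      proof (cases "n \<in> P")
        case True
        hence "t - ps n < r ^ Suc n" using False by auto
        also have "\<dots> \<le> T (Suc n)" using pool[OF True] by (simp add: T_def)
        finally show ?thesis using e Suc by simp
      next
        case nP: False
        hence "T n = T (Suc n)" using Tstep[of n] by (simp add: ind_def)
        thus ?thesis using e Suc by simp
      qed
    qed
  qed
  have Tle: "T n \<le> r ^ Suc n / (1 - r)" for n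
  proof -
    have "T n \<le> sig r {n..}" unfolding T_def using r by (intro sig_mono) auto
    thus ?thesis using sig_atLeast[of r n] r by simp
  qed
  have "(\<lambda>n. r * r ^ n / (1 - r)) \<longlonglongrightarrow> r * 0 / (1 - r)"
    using r by (intro tendsto_divide tendsto_mult tendsto_const LIMSEQ_power_zero) auto
  hence z: "(\<lambda>n. r ^ Suc n / (1 - r)) \<longlonglongrightarrow> 0" by simp
  have "(\<lambda>n. t - ps n) \<longlonglongrightarrow> 0"
  proof (rule tendsto_sandwich[OF _ _ tendsto_const z])
    have "t - ps n \<le> r ^ Suc n / (1 - r)" for n using inv[of n] Tle[of n] by linarith
    thus "\<forall>\<^sub>F n in sequentially. t - ps n \<le> r ^ Suc n / (1 - r)" by simp
  qed (use inv in auto)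
  hence "(\<lambda>n. t - (t - ps n)) \<longlonglongrightarrow> t - 0" by (intro tendsto_diff tendsto_const)
  hence "(\<lambda>n. \<Sum>j<n. ind r B j) \<longlonglongrightarrow> t" by (simp add: psB)
  hence "ind r B sums t" by (simp add: sums_def)
  hence "sig r B = t" unfolding sig_def using sums_unique by metis
  moreover have "B \<subseteq> P" by (auto simp: B_def)
  ultimately show ?thesis by blast
qed



lemma pool_prop:
  fixes K M p :: nat
  assumes r: "0 < r" "r < 1" and K: "K \<ge> 1" and Kr: "r ^ (K + 1) \<le> r ^ 2 + r - 1"
  shows "r ^ Suc p \<le> sig r (- {n. M \<le> n \<and> K dvd n} \<inter> {Suc p..})"
proof -
  define R where "R = {n. M \<le> n \<and> K dvd n}"
  define X where "X = R \<inter> {Suc p..}"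
  define Y where "Y = - R \<inter> {Suc p..}"
  have r0: "0 \<le> r" using r by simp
  have "{Suc p..} = Y \<union> X" "Y \<inter> X = {}" by (auto simp: X_def Y_def)
  hence split: "sig r {Suc p..} = sig r Y + sig r X" using sig_union[OF r0 r(2)] by metis
  define ms where "ms = K * (p div K + 1)"
  have Xsub: "X \<subseteq> {ms} \<union> {Suc p + K..}"
  proof
    fix n assume n: "n \<in> X"
    show "n \<in> {ms} \<union> {Suc p + K..}"
    proof (cases "n < Suc p + K")
      case True
      obtain q where q: "n = K * q" using n by (auto simp: X_def R_def)
      have pd: "K * (p div K) + p mod K = p" using div_mult_mod_eq[of p K] by (simp add: mult.commute)
      have pm: "p mod K < K" using K by simp
      have a: "K * (p div K) \<le> p" using div_times_less_eq_dividend[of p K] by (simp add: mult.commute)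
      have b: "Suc p \<le> n" using n by (simp add: X_def)
      have "K * (p div K) < K * q" using a b q by linarith
      hence "p div K < q" by simp
      moreover have "K * q < K * (p div K) + 2 * K" using True q pd pm by linarith
      hence "K * q < K * (p div K + 2)" by (simp add: algebra_simps)
      hence "q < p div K + 2" using mult_less_cancel1[THEN iffD1] by blast
      ultimately have "q = p div K + 1" by simp
      thus ?thesis by (simp add: q ms_def)
    qed simp
  qed
  have ms: "Suc p \<le> ms"
  proof -
    have "K * (p div K) + p mod K = p" using div_mult_mod_eq[of p K] by (simp add: mult.commute)
    moreover have "p mod K < K" using K by simp
    ultimately have "Suc p \<le> K * (p div K) + K" by linarith
    thus ?thesis unfolding ms_def by (simp add: algebra_simps)
  qed
  have "sig r X \<le> sig r ({ms} \<union> {Suc p + K..})" by (rule sig_mono[OF r0 r(2) Xsub])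
  also have "\<dots> \<le> sig r {ms} + sig r {Suc p + K..}" by (rule sig_union_le[OF r0 r(2)])
  also have "\<dots> = r ^ Suc ms + r ^ Suc (Suc p + K) / (1 - r)" using r by (simp add: sig_single sig_atLeast)
  also have "r ^ Suc ms \<le> r ^ Suc (Suc p)" using ms r by (intro power_decreasing) auto
  finally have sX: "sig r X \<le> r ^ Suc (Suc p) + r ^ Suc (Suc p + K) / (1 - r)" by simp
  define u where "u = r ^ Suc p"
  have u: "0 < u" using r by (simp add: u_def)
  have e1: "r ^ Suc (Suc p) = u * r" "r ^ Suc (Suc p + K) = u * r ^ (K + 1)"
    by (simp_all add: u_def power_add mult_ac)
  have sY: "sig r Y \<ge> u * r / (1 - r) - u * r - u * r ^ (K + 1) / (1 - r)"
  proof -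
    have sX': "sig r X \<le> u * r + u * r ^ (K + 1) / (1 - r)" using sX unfolding e1 .
    have sA: "sig r {Suc p..} = u * r / (1 - r)" using sig_atLeast[OF r0 r(2), of "Suc p"] unfolding e1 .
    show ?thesis using split sX' sA by linarith
  qed
  have key: "u * (1 - r) \<le> u * (r ^ 2 - r ^ (K + 1))" using Kr u by (intro mult_left_mono) auto
  have "u \<le> u * r / (1 - r) - u * r - u * r ^ (K + 1) / (1 - r)"
  proof -
    have "u * r / (1 - r) - u * r - u * r ^ (K + 1) / (1 - r) = u * (r ^ 2 - r ^ (K + 1)) / (1 - r)"
    proof -
      have d: "1 - r \<noteq> 0" using r by simp
      have "u * r / (1 - r) - u * r - u * r ^ (K + 1) / (1 - r) = (u * r - u * r * (1 - r) - u * r ^ (K + 1)) / (1 - r)"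
        using d by (simp add: diff_divide_distrib)
      also have "u * r - u * r * (1 - r) - u * r ^ (K + 1) = u * (r ^ 2 - r ^ (K + 1))"
        by (simp add: algebra_simps power2_eq_square)
      finally show ?thesis .
    qed
    moreover have "u \<le> u * (r ^ 2 - r ^ (K + 1)) / (1 - r)" using key r by (simp add: pos_le_divide_eq)
    ultimately show ?thesis by simp
  qed
  thus ?thesis using sY by (simp add: u_def Y_def R_def)
qed



lemma block_mem: assumes "gapok S (True # replicate n False @ [True])" shows "n \<in> S"
proof -
  have "(n + 1) - 0 - 1 \<in> S"
  proof (rule gapokD[OF assms])
    fix k assume "0 < k" "k < n + 1"
    thus "\<not> (True # replicate n False @ [True]) ! k" by (simp add: nth_append nth_Cons')
  qed (auto simp: nth_append)
  thus ?thesis by simp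
qed

lemma gap_shift_inj: assumes "gap_shift S1 = gap_shift S2" shows "S1 = S2"
proof -
  have e: "gapok S1 w \<longleftrightarrow> gapok S2 w" for w
    using arg_cong[OF assms, of words] by (auto simp: words_gap)
  show ?thesis
  proof (intro set_eqI iffI)
    fix n assume "n \<in> S1"
    hence "gapok S1 (True # replicate n False @ [True])" by (rule gapok_block)
    thus "n \<in> S2" using e block_mem by metis
  next
    fix n assume "n \<in> S2"
    hence "gapok S2 (True # replicate n False @ [True])" by (rule gapok_block)
    thus "n \<in> S1" using e block_mem by metis
  qed
qed

theorem theorem4p3:
  fixes q :: real
  assumes "0 < q" and "q < log 2 ((1 + sqrt 5) / 2)"
  shows "\<exists>\<X> :: (int \<Rightarrow> bool) set set.
           \<X> \<approx> (UNIV :: real set) \<and>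
           (\<forall>X\<in>\<X>. (\<exists>S. S \<noteq> {} \<and> X = gap_shift S) \<and>
                    has_specification X \<and> entropy X = q)"
proof -
  define y where "y = 2 powr q"
  define phi :: real where "phi = (1 + sqrt 5) / 2"
  have phipos: "0 < phi" by (simp add: phi_def add_pos_nonneg)
  have "2 powr 0 < 2 powr q" by (rule powr_less_mono) (use assms in auto)
  hence y1: "1 < y" by (simp add: y_def)
  have "2 powr q < 2 powr (log 2 phi)" by (rule powr_less_mono) (use assms in \<open>auto simp: phi_def\<close>)
  hence yphi: "y < phi" using phipos by (simp add: y_def)
  have yy: "y * y - y < 1"
  proof -
    define s where "s = sqrt 5"
    have s2: "s * s = 5" by (simp add: s_def)
    have a: "2 * y - 1 < s" using yphi by (simp add: phi_def s_def)
    have b: "0 \<le> 2 * y - 1" using y1 by simp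
    have "(2 * y - 1) * (2 * y - 1) < s * s" using a b by (intro mult_strict_mono) auto
    thus ?thesis using s2 by (simp add: algebra_simps)
  qed
  define r where "r = 2 powr (- q)"
  have ry: "r = 1 / y" by (simp add: r_def y_def powr_minus_divide)
  have r0: "0 < r" and r1: "r < 1" using y1 by (auto simp: ry)
  have rq: "- log 2 r = q" by (simp add: r_def)
  have rc: "0 < r ^ 2 + r - 1"
  proof -
    have "r ^ 2 + r - 1 = (1 + y - y * y) / (y * y)" using y1 by (simp add: ry field_simps power2_eq_square)
    moreover have "0 < 1 + y - y * y" using yy by simp
    ultimately show ?thesis using y1 by simp
  qed
  have rhalf: "0 < 2 * r - 1"
  proof -
    have "r * r < r * 1" using r0 r1 by (intro mult_strict_left_mono) auto
    thus ?thesis using rc by (simp add: power2_eq_square)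
  qed
  have rpow: "(\<lambda>n. r ^ n) \<longlonglongrightarrow> 0" using r0 r1 by (intro LIMSEQ_power_zero) auto
  obtain N0 where N0: "\<And>n. n \<ge> N0 \<Longrightarrow> r ^ n < r ^ 2 + r - 1"
    using order_tendstoD(2)[OF rpow rc] unfolding eventually_sequentially by blast
  define K where "K = N0 + 1"
  have K1: "K \<ge> 1" by (simp add: K_def)
  have Kr: "r ^ (K + 1) \<le> r ^ 2 + r - 1" using N0[of "K + 1"] by (simp add: K_def)
  define c' where "c' = min (1 - r) (2 * r - 1)"
  have c': "0 < c'" using r1 rhalf by (simp add: c'_def)
  obtain N1 where N1: "\<And>n. n \<ge> N1 \<Longrightarrow> r ^ n < c'"
    using order_tendstoD(2)[OF rpow c'] unfolding eventually_sequentially by blast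
  define m where "m = N1 + 1"
  define M where "M = 2 * K * m"
  have mM: "m \<le> M" using K1 by (simp add: M_def)
  have rM: "r ^ Suc M < c'" using N1[of "Suc M"] mM by (simp add: m_def)
  have rr0: "0 \<le> r" using r0 by simp
  define R where "R = {n. M \<le> n \<and> K dvd n}"
  define P where "P = - R"
  define E where "E = {n. M \<le> n \<and> 2 * K dvd n}"
  define CA where "CA = (\<lambda>A. {M + K + 2 * K * j | j. j \<in> A})"
  define tA where "tA = (\<lambda>A. 1 - sig r (E \<union> CA A))"
  define BA where "BA = (\<lambda>A. SOME B. B \<subseteq> P \<and> sig r B = tA A)"
  define SA where "SA = (\<lambda>A. E \<union> CA A \<union> BA A)"
  have sigM: "sig r {M..} \<le> 1" and sigP: "1 \<le> sig r P"
  proof -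
    have sM: "sig r {M..} = r ^ Suc M / (1 - r)" by (rule sig_atLeast[OF rr0 r1])
    have "r ^ Suc M \<le> 1 - r" using rM by (simp add: c'_def)
    thus "sig r {M..} \<le> 1" using r1 by (simp add: sM)
    have "sig r UNIV = sig r P + sig r R" unfolding P_def using sig_union[OF rr0 r1, of "-R" R]
      by (simp add: Un_commute)
    moreover have "sig r UNIV = r / (1 - r)" using sig_atLeast[OF rr0 r1, of 0] by simp
    moreover have "sig r R \<le> sig r {M..}" by (rule sig_mono[OF rr0 r1]) (auto simp: R_def)
    moreover have "r ^ Suc M \<le> 2 * r - 1" using rM by (simp add: c'_def)
    hence "1 - r \<le> r - r ^ Suc M" by simp
    hence "1 \<le> (r - r ^ Suc M) / (1 - r)" using r1 by (simp add: pos_le_divide_eq)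
    hence "1 \<le> r / (1 - r) - r ^ Suc M / (1 - r)" by (simp add: diff_divide_distrib)
    ultimately show "1 \<le> sig r P" using sM by linarith
  qed
  have CK: "M + K + 2 * K * j = K * (2 * m + 1 + 2 * j)" for j by (simp add: M_def algebra_simps)
  have ECR: "E \<union> CA A \<subseteq> R" for A
  proof
    fix n assume "n \<in> E \<union> CA A"
    thus "n \<in> R"
    proof
      assume "n \<in> E" thus ?thesis by (auto simp: E_def R_def intro: dvd_mult_right)
    next
      assume "n \<in> CA A"
      then obtain j where "n = M + K + 2 * K * j" by (auto simp: CA_def)
      hence n: "n = K * (2 * m + 1 + 2 * j)" "M \<le> n" using CK[of j] by auto
      have "K dvd n" unfolding n(1) by (rule dvd_triv_left)
      thus ?thesis using n(2) by (simp add: R_def)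
    qed
  qed
  have BA: "BA A \<subseteq> P \<and> sig r (BA A) = tA A" for A
  proof -
    have "sig r (E \<union> CA A) \<le> sig r {M..}" by (rule sig_mono[OF rr0 r1]) (use ECR in \<open>auto simp: R_def\<close>)
    hence t0: "0 \<le> tA A" using sigM by (simp add: tA_def)
    have "tA A \<le> 1" using sig_nonneg[OF rr0 r1, of "E \<union> CA A"] by (simp add: tA_def)
    hence t1: "tA A \<le> sig r P" using sigP by simp
    have "\<exists>B\<subseteq>P. sig r B = tA A"
    proof (rule greedy[OF r0 r1 t0 t1])
      fix p show "r ^ Suc p \<le> sig r (P \<inter> {Suc p..})"
        using pool_prop[OF r0 r1 K1 Kr, of p M] by (simp add: P_def R_def)
    qed
    thus ?thesis unfolding BA_def by (rule someI_ex[where P="\<lambda>B. B \<subseteq> P \<and> sig r B = tA A", OF exE]) blast+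
  qed
  have sigSA: "sig r (SA A) = 1" for A
  proof -
    have "(E \<union> CA A) \<inter> BA A = {}" using ECR[of A] BA[of A] by (auto simp: P_def)
    hence "sig r (SA A) = sig r (E \<union> CA A) + sig r (BA A)" unfolding SA_def by (rule sig_union[OF rr0 r1])
    thus ?thesis using BA[of A] by (simp add: tA_def)
  qed
  have Kpos: "0 < K" using K1 by simp
  have SAdec: "M + K + 2 * K * j \<in> SA A \<longleftrightarrow> j \<in> A" for A j
  proof
    assume "j \<in> A" thus "M + K + 2 * K * j \<in> SA A" by (auto simp: SA_def CA_def)
  next
    assume h: "M + K + 2 * K * j \<in> SA A"
    have inR: "M + K + 2 * K * j \<in> R" using ECR[of "{j}"] by (auto simp: CA_def)
    hence "M + K + 2 * K * j \<notin> BA A" using BA[of A] by (auto simp: P_def)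
    moreover have "M + K + 2 * K * j \<notin> E"
    proof
      assume "M + K + 2 * K * j \<in> E"
      hence d: "2 * K dvd (2 * K * (m + j)) + K" by (simp add: E_def M_def algebra_simps)
      have "2 * K dvd K" using d by (simp add: dvd_add_right_iff)
      hence "2 * K \<le> K" using Kpos by (intro dvd_imp_le) auto
      thus False using Kpos by simp
    qed
    ultimately have "M + K + 2 * K * j \<in> CA A" using h by (auto simp: SA_def)
    then obtain j' where "j' \<in> A" "M + K + 2 * K * j = M + K + 2 * K * j'" by (auto simp: CA_def)
    thus "j \<in> A" using Kpos by simp
  qed
  have injSA: "inj (\<lambda>A. gap_shift (SA A))"
  proof (rule injI)
    fix A1 A2 assume "gap_shift (SA A1) = gap_shift (SA A2)"
    hence "SA A1 = SA A2" by (rule gap_shift_inj)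
    thus "A1 = A2" using SAdec by blast
  qed
  define \<X> where "\<X> = (\<lambda>A. gap_shift (SA A)) ` (UNIV :: nat set set)"
  have "\<X> \<approx> (UNIV :: nat set set)" unfolding \<X>_def by (rule inj_on_image_eqpoll_self[OF injSA])
  hence card: "\<X> \<approx> (UNIV :: real set)" using nat_sets_eqpoll_reals eqpoll_trans by blast
  have props: "(\<exists>S. S \<noteq> {} \<and> X = gap_shift S) \<and> has_specification X \<and> entropy X = q" if "X \<in> \<X>" for X
  proof -
    obtain A where X: "X = gap_shift (SA A)" using \<open>X \<in> \<X>\<close> by (auto simp: \<X>_def)
    have ME: "M + 2 * K * j \<in> SA A" for j by (auto simp: SA_def E_def M_def)
    have "SA A \<noteq> {}" using ME[of 0] by auto
    moreover have "has_specification X" unfolding X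
      by (rule spec_gap[where D="2 * K" and M=M]) (use K1 ME in \<open>auto simp: M_def m_def\<close>)
    moreover have "entropy X = q" unfolding X using entropy_gap[OF r0 r1 sigSA[of A]] rq by simp
    ultimately show ?thesis using X by blast
  qed
  show ?thesis using card props by blast
qed


end
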